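(* Let $R$ be a commutative unital ring, $G$ a group and $(\mathcal B_1,\Phi_1)\subseteq(\mathcal B_2,\Phi_2)$ a partial subaction of $G$ on generalized Boolean algebras; let $A_k=\mathrm{Lc}(R,\mathcal B_k)\rtimes_{\Phi_k}G$ with $A_1\subseteq A_2$. Suppose $\mathcal B_1$ is an ideal of $\mathcal B_2$ and $A_1$ is contained in no proper two-sided ideal of $A_2$. Then for every $U\in\mathcal B_2$ there exist an index set $I$, elements $U_i\in\mathcal B_1$ ($i\in I$) and a surjective left $A_2$-module homomorphism $\bigoplus_{i\in I}A_2(U_i\delta_e)\to A_2(U\delta_e)$.
   Context: A generalized Boolean algebra is a distributive relatively complemented lattice with least element $0$; an ideal is a subset closed under finite joins and under meets with arbitrary elements. A partial action $\Phi$ of $G$ on $\mathcal B$: ideals $\mathcal I_t$ and isomorphisms $\phi_t:\mathcal I_{t^{-1}}\to\mathcal I_t$ with $\mathcal I_e=\mathcal B$, $\phi_e=\mathrm{id}$, $\phi_s(\mathcal I_{s^{-1}}\cap\mathcal I_t)=\mathcal I_s\cap\mathcal I_{st}$, $\phi_s\phi_t=\phi_{st}$ where defined. A partial subaction: $\mathcal B_1\subseteq\mathcal B_2$ sub generalized Boolean algebra, $\mathcal I_{1,t}\subseteq\mathcal I_{2,t}$, $\phi_{2,t}$ restricting to $\phi_{1,t}$. $\mathrm{Lc}(R,\mathcal B)$ is the algebra of locally constant compactly supported $R$-valued functions on the Stone space of $\mathcal B$, spanned by idempotents $1_U$; $\mathrm{Lc}(R,\mathcal B)\rtimes_\Phi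 G=\bigoplus_g\mathrm{Lc}(R,\mathcal I_g)\delta_g$ with $U\delta_g:=1_U\delta_g$ and $(U\delta_g)(V\delta_h)=\phi_g(\phi_{g^{-1}}(U)\cap V)\delta_{gh}$. $A_1$ is identified with the $R$-span of $\{U\delta_g:U\in\mathcal I_{1,g}\}$ in $A_2$. *)

theory Defs
  imports Main
begin

text \<open>A generalized Boolean algebra is represented as a subset of a type of class
  boolean_algebra that contains bot and is closed under meets, joins and relative
  complements (differences). Every generalized Boolean algebra arises in this way
  (e.g. as a ring of subsets of its Stone space).\<close>

definition gba :: "'b::boolean_algebra set \<Rightarrow> bool" where
  "gba B \<longleftrightarrow> bot \<in> B \<and> (\<forall>x\<in>B. \<forall>y\<in>B. inf x y \<in> B \<and> sup x y \<in> B \<and> x - y \<in> B)"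

definition gba_ideal :: "'b::boolean_algebra set \<Rightarrow> 'b set \<Rightarrow> bool" where
  "gba_ideal B J \<longleftrightarrow> J \<subseteq> B \<and> bot \<in> J \<and> (\<forall>x\<in>J. \<forall>y\<in>J. sup x y \<in> J)
      \<and> (\<forall>x\<in>J. \<forall>y\<in>B. inf x y \<in> J)"

definition gba_iso :: "'b::boolean_algebra set \<Rightarrow> 'b set \<Rightarrow> ('b \<Rightarrow> 'b) \<Rightarrow> bool" where
  "gba_iso A C f \<longleftrightarrow> bij_betw f A C \<and>
      (\<forall>x\<in>A. \<forall>y\<in>A. f (inf x y) = inf (f x) (f y) \<and> f (sup x y) = sup (f x) (f y))"

section \<open>Partial actions (group written additively: e = 0, st = s + t, t^-1 = - t)\<close>

definition partial_action ::
  "'b::boolean_algebra set \<Rightarrow> ('g::group_add \<Rightarrow> 'b set) \<Rightarrow> ('g \<Rightarrow> 'b \<Rightarrow> 'b) \<Rightarrow> bool" where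
  "partial_action B I \<phi> \<longleftrightarrow> gba B \<and> (\<forall>t. gba_ideal B (I t)) \<and>
     (\<forall>t. gba_iso (I (- t)) (I t) (\<phi> t)) \<and> I 0 = B \<and> (\<forall>x\<in>B. \<phi> 0 x = x) \<and>
     (\<forall>s t. \<phi> s ` (I (- s) \<inter> I t) = I s \<inter> I (s + t)) \<and>
     (\<forall>s t. \<forall>x\<in>I (- t). \<phi> t x \<in> I (- s) \<longrightarrow> \<phi> s (\<phi> t x) = \<phi> (s + t) x)"

definition partial_subaction ::
  "'b::boolean_algebra set \<Rightarrow> ('g::group_add \<Rightarrow> 'b set) \<Rightarrow> ('g \<Rightarrow> 'b \<Rightarrow> 'b) \<Rightarrow>
   'b set \<Rightarrow> ('g \<Rightarrow> 'b set) \<Rightarrow> ('g \<Rightarrow> 'b \<Rightarrow> 'b) \<Rightarrow> bool" where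
  "partial_subaction B1 I1 \<phi>1 B2 I2 \<phi>2 \<longleftrightarrow>
     partial_action B1 I1 \<phi>1 \<and> partial_action B2 I2 \<phi>2 \<and> B1 \<subseteq> B2 \<and>
     (\<forall>t. I1 t \<subseteq> I2 t) \<and> (\<forall>t. \<forall>x\<in>I1 (- t). \<phi>2 t x = \<phi>1 t x)"

definition stone :: "'b::boolean_algebra set \<Rightarrow> 'b set set" where
  "stone B = {p. p \<subseteq> B \<and> p \<noteq> {} \<and> bot \<notin> p \<and>
      (\<forall>x\<in>p. \<forall>y\<in>B. x \<le> y \<longrightarrow> y \<in> p) \<and> (\<forall>x\<in>p. \<forall>y\<in>p. inf x y \<in> p) \<and>
      (\<forall>x\<in>B. \<forall>y\<in>B. sup x y \<in> p \<longrightarrow> x \<in> p \<or> y \<in> p)}"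

text \<open>The idempotent 1_U (characteristic function of the compact open set of U).\<close>
definition ind :: "'b::boolean_algebra set \<Rightarrow> 'b \<Rightarrow> 'b set \<Rightarrow> 'r::comm_ring_1" where
  "ind B U p = (if p \<in> stone B \<and> U \<in> p then 1 else 0)"

text \<open>Lc(R,J) for an ideal J of B, as the R-span of the 1_U, U in J (functions on the
  Stone space of B, extended by zero).\<close>
definition lc :: "'b::boolean_algebra set \<Rightarrow> 'b set \<Rightarrow> ('b set \<Rightarrow> 'r::comm_ring_1) set" where
  "lc B J = {f. \<exists>S c. finite S \<and> S \<subseteq> J \<and> f = (\<lambda>p. \<Sum>U\<in>S. c U * ind B U p)}"

text \<open>Induced partial homeomorphism theta_g : D_{g^-1} -> D_g of the Stone space and the
  induced partial action alpha_g : Lc(R,I_{g^-1}) -> Lc(R,I_g), alpha_g(1_U) = 1_{phi_g U}.\<close>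
definition theta :: "'b::boolean_algebra set \<Rightarrow> ('g::group_add \<Rightarrow> 'b set) \<Rightarrow> ('g \<Rightarrow> 'b \<Rightarrow> 'b)
    \<Rightarrow> 'g \<Rightarrow> 'b set \<Rightarrow> 'b set" where
  "theta B I \<phi> g p = {V\<in>B. \<exists>W\<in>p \<inter> I (- g). \<phi> g W \<le> V}"

definition alpha :: "'b::boolean_algebra set \<Rightarrow> ('g::group_add \<Rightarrow> 'b set) \<Rightarrow> ('g \<Rightarrow> 'b \<Rightarrow> 'b)
    \<Rightarrow> 'g \<Rightarrow> ('b set \<Rightarrow> 'r::comm_ring_1) \<Rightarrow> 'b set \<Rightarrow> 'r" where
  "alpha B I \<phi> g f q = (if q \<in> stone B \<and> q \<inter> I g \<noteq> {} then f (theta B I \<phi> (- g) q) else 0)"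

text \<open>An element is a finitely supported family g \<mapsto> a_g with a_g in Lc(R,I_g).\<close>
definition cp :: "'b::boolean_algebra set \<Rightarrow> ('g::group_add \<Rightarrow> 'b set)
    \<Rightarrow> ('g \<Rightarrow> 'b set \<Rightarrow> 'r::comm_ring_1) set" where
  "cp B I = {a. finite {g. a g \<noteq> (\<lambda>_. 0)} \<and> (\<forall>g. a g \<in> lc B (I g))}"

definition cp_zero :: "'g \<Rightarrow> 'b set \<Rightarrow> 'r::comm_ring_1" where
  "cp_zero = (\<lambda>g p. 0)"

definition cp_add :: "('g \<Rightarrow> 'b set \<Rightarrow> 'r::comm_ring_1) \<Rightarrow> ('g \<Rightarrow> 'b set \<Rightarrow> 'r) \<Rightarrow> 'g \<Rightarrow> 'b set \<Rightarrow> 'r" where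
  "cp_add a b = (\<lambda>g p. a g p + b g p)"

definition cp_smult :: "'r::comm_ring_1 \<Rightarrow> ('g \<Rightarrow> 'b set \<Rightarrow> 'r) \<Rightarrow> 'g \<Rightarrow> 'b set \<Rightarrow> 'r" where
  "cp_smult r a = (\<lambda>g p. r * a g p)"

text \<open>(a_g \<delta>_g)(b_h \<delta>_h) = alpha_g(alpha_{g^-1}(a_g) b_h) \<delta>_{gh}.\<close>
definition cp_mult :: "'b::boolean_algebra set \<Rightarrow> ('g::group_add \<Rightarrow> 'b set) \<Rightarrow> ('g \<Rightarrow> 'b \<Rightarrow> 'b)
    \<Rightarrow> ('g \<Rightarrow> 'b set \<Rightarrow> 'r::comm_ring_1) \<Rightarrow> ('g \<Rightarrow> 'b set \<Rightarrow> 'r) \<Rightarrow> 'g \<Rightarrow> 'b set \<Rightarrow> 'r" where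
  "cp_mult B I \<phi> a b = (\<lambda>k p. \<Sum>g\<in>{g. a g \<noteq> (\<lambda>_. 0)}.
       alpha B I \<phi> g (\<lambda>q. alpha B I \<phi> (- g) (a g) q * b (- g + k) q) p)"

text \<open>U \<delta>_g := 1_U \<delta>_g.\<close>
definition delta :: "'b::boolean_algebra set \<Rightarrow> 'b \<Rightarrow> 'g \<Rightarrow> 'g \<Rightarrow> 'b set \<Rightarrow> 'r::comm_ring_1" where
  "delta B U g = (\<lambda>h p. if h = g then ind B U p else 0)"

text \<open>R-span of {U \<delta>_g : U \<in> J g} inside the crossed product (this is A_1 inside A_2).\<close>
definition cp_span :: "'b::boolean_algebra set \<Rightarrow> ('g \<Rightarrow> 'b set)
    \<Rightarrow> ('g \<Rightarrow> 'b set \<Rightarrow> 'r::comm_ring_1) set" where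
  "cp_span B J = {a. \<exists>S c. finite S \<and> S \<subseteq> {(U, g). U \<in> J g} \<and>
       a = (\<lambda>h p. \<Sum>(U, g)\<in>S. c (U, g) * delta B U g h p)}"

definition cp_ideal :: "'b::boolean_algebra set \<Rightarrow> ('g::group_add \<Rightarrow> 'b set) \<Rightarrow> ('g \<Rightarrow> 'b \<Rightarrow> 'b)
    \<Rightarrow> ('g \<Rightarrow> 'b set \<Rightarrow> 'r::comm_ring_1) set \<Rightarrow> bool" where
  "cp_ideal B I \<phi> J \<longleftrightarrow> J \<subseteq> cp B I \<and> cp_zero \<in> J \<and>
     (\<forall>x\<in>J. \<forall>y\<in>J. cp_add x y \<in> J) \<and> (\<forall>r. \<forall>x\<in>J. cp_smult r x \<in> J) \<and>
     (\<forall>a\<in>cp B I. \<forall>x\<in>J. cp_mult B I \<phi> a x \<in> J \<and> cp_mult B I \<phi> x a \<in> J)"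

definition cp_lmod :: "'b::boolean_algebra set \<Rightarrow> ('g::group_add \<Rightarrow> 'b set) \<Rightarrow> ('g \<Rightarrow> 'b \<Rightarrow> 'b)
    \<Rightarrow> ('g \<Rightarrow> 'b set \<Rightarrow> 'r::comm_ring_1) \<Rightarrow> ('g \<Rightarrow> 'b set \<Rightarrow> 'r) set" where
  "cp_lmod B I \<phi> x = {cp_mult B I \<phi> a x | a. a \<in> cp B I}"

definition dsum :: "'i set \<Rightarrow> ('i \<Rightarrow> ('g \<Rightarrow> 'b set \<Rightarrow> 'r::comm_ring_1) set)
    \<Rightarrow> ('i \<Rightarrow> 'g \<Rightarrow> 'b set \<Rightarrow> 'r) set" where
  "dsum Idx M = {x. (\<forall>i\<in>Idx. x i \<in> M i) \<and> (\<forall>i. i \<notin> Idx \<longrightarrow> x i = cp_zero) \<and>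
       finite {i. x i \<noteq> cp_zero}}"

definition surj_lmod_hom :: "'b::boolean_algebra set \<Rightarrow> ('g::group_add \<Rightarrow> 'b set) \<Rightarrow> ('g \<Rightarrow> 'b \<Rightarrow> 'b)
    \<Rightarrow> ('i \<Rightarrow> 'g \<Rightarrow> 'b set \<Rightarrow> 'r::comm_ring_1) set \<Rightarrow> ('g \<Rightarrow> 'b set \<Rightarrow> 'r) set
    \<Rightarrow> (('i \<Rightarrow> 'g \<Rightarrow> 'b set \<Rightarrow> 'r) \<Rightarrow> 'g \<Rightarrow> 'b set \<Rightarrow> 'r) \<Rightarrow> bool" where
  "surj_lmod_hom B I \<phi> D N F \<longleftrightarrow>
     (\<forall>x\<in>D. \<forall>y\<in>D. F (\<lambda>i. cp_add (x i) (y i)) = cp_add (F x) (F y)) \<and>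
     (\<forall>a\<in>cp B I. \<forall>x\<in>D. F (\<lambda>i. cp_mult B I \<phi> a (x i)) = cp_mult B I \<phi> a (F x)) \<and>
     F ` D = N"

end

theory Submission
  imports Defs "HOL-Library.Function_Algebras"
begin


locale pa =
  fixes B :: "'b::boolean_algebra set" and I :: "'g::group_add \<Rightarrow> 'b set"
    and \<phi> :: "'g \<Rightarrow> 'b \<Rightarrow> 'b"
  assumes pa: "partial_action B I \<phi>"
begin

lemma gbaB: "gba B" using pa by (simp add: partial_action_def)
lemma idl: "gba_ideal B (I t)" using pa by (simp add: partial_action_def)
lemma I_sub: "I t \<subseteq> B" using idl[of t] by (simp add: gba_ideal_def)
lemma I_sub': "x \<in> I t \<Longrightarrow> x \<in> B" using I_sub by blast
lemma bot_I: "bot \<in> I t" using idl[of t] by (simp add: gba_ideal_def)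
lemma I_inf: "x \<in> I t \<Longrightarrow> y \<in> B \<Longrightarrow> inf x y \<in> I t"
  using idl[of t] by (simp add: gba_ideal_def)
lemma I_inf2: "x \<in> I t \<Longrightarrow> y \<in> B \<Longrightarrow> inf y x \<in> I t"
  using I_inf by (simp add: inf_commute)
lemma I_sup: "x \<in> I t \<Longrightarrow> y \<in> I t \<Longrightarrow> sup x y \<in> I t"
  using idl[of t] by (simp add: gba_ideal_def)
lemma B_inf: "x \<in> B \<Longrightarrow> y \<in> B \<Longrightarrow> inf x y \<in> B"
  using gbaB by (simp add: gba_def)
lemma I0: "I 0 = B" using pa by (simp add: partial_action_def)
lemma phi0: "x \<in> B \<Longrightarrow> \<phi> 0 x = x" using pa by (simp add: partial_action_def)
lemma iso: "gba_iso (I (- t)) (I t) (\<phi> t)" using pa by (simp add: partial_action_def)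
lemma phi_in: "x \<in> I (- t) \<Longrightarrow> \<phi> t x \<in> I t"
  using iso[of t] by (auto simp: gba_iso_def bij_betw_def)
lemma phi_inf: "x \<in> I (- t) \<Longrightarrow> y \<in> I (- t) \<Longrightarrow> \<phi> t (inf x y) = inf (\<phi> t x) (\<phi> t y)"
  using iso[of t] by (auto simp: gba_iso_def)
lemma phi_sup: "x \<in> I (- t) \<Longrightarrow> y \<in> I (- t) \<Longrightarrow> \<phi> t (sup x y) = sup (\<phi> t x) (\<phi> t y)"
  using iso[of t] by (auto simp: gba_iso_def)
lemma phi_comp: "x \<in> I (- t) \<Longrightarrow> \<phi> t x \<in> I (- s) \<Longrightarrow> \<phi> s (\<phi> t x) = \<phi> (s + t) x"
  using pa by (simp add: partial_action_def)
lemma phi_dom: "x \<in> I (- s) \<Longrightarrow> x \<in> I t \<Longrightarrow> \<phi> s x \<in> I (s + t)"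
proof -
  assume a: "x \<in> I (- s)" "x \<in> I t"
  have "\<phi> s ` (I (- s) \<inter> I t) = I s \<inter> I (s + t)" using pa by (simp add: partial_action_def)
  thus ?thesis using a by blast
qed
lemma phi_inv: "x \<in> I (- t) \<Longrightarrow> \<phi> (- t) (\<phi> t x) = x"
proof -
  assume a: "x \<in> I (- t)"
  have "\<phi> t x \<in> I (- (- t))" using phi_in[OF a] by simp
  hence "\<phi> (- t) (\<phi> t x) = \<phi> (- t + t) x" using phi_comp[OF a] by blast
  thus ?thesis using phi0 I_sub' a by simp
qed
lemma phi_inv': "x \<in> I t \<Longrightarrow> \<phi> t (\<phi> (- t) x) = x"
  using phi_inv[of x "- t"] by simp
lemma phi_in': "x \<in> I t \<Longrightarrow> \<phi> (- t) x \<in> I (- t)"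
  using phi_in[of x "- t"] by simp
lemma phi_mono: "x \<in> I (- t) \<Longrightarrow> y \<in> I (- t) \<Longrightarrow> x \<le> y \<Longrightarrow> \<phi> t x \<le> \<phi> t y"
  by (metis inf.absorb_iff1 phi_inf)
lemma phi_refl: "x \<in> I (- t) \<Longrightarrow> y \<in> I (- t) \<Longrightarrow> \<phi> t x \<le> \<phi> t y \<Longrightarrow> x \<le> y"
proof -
  assume a: "x \<in> I (- t)" "y \<in> I (- t)" "\<phi> t x \<le> \<phi> t y"
  have "\<phi> (- t) (\<phi> t x) \<le> \<phi> (- t) (\<phi> t y)"
    using phi_mono[of "\<phi> t x" "- t" "\<phi> t y"] phi_in a by simp
  thus ?thesis using phi_inv a by simp
qed
lemma phi_bot: "\<phi> t bot = bot"
proof -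
  have "\<phi> t bot \<le> \<phi> t (\<phi> (- t) bot)"
    using phi_mono[of bot t "\<phi> (- t) bot"] bot_I phi_in' by simp
  thus ?thesis using phi_inv' bot_I by (simp add: bot_unique)
qed

lemma theta_stone:
  assumes q: "q \<in> stone B" and W0: "W0 \<in> q" "W0 \<in> I (- h)"
  shows "theta B I \<phi> h q \<in> stone B"
proof -
  let ?T = "theta B I \<phi> h q"
  have qB: "q \<subseteq> B" and botq: "bot \<notin> q" and up: "\<forall>x\<in>q. \<forall>y\<in>B. x \<le> y \<longrightarrow> y \<in> q"
    and mi: "\<forall>x\<in>q. \<forall>y\<in>q. inf x y \<in> q"
    and pr: "\<forall>x\<in>B. \<forall>y\<in>B. sup x y \<in> q \<longrightarrow> x \<in> q \<or> y \<in> q"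
    using q by (auto simp: stone_def)
  have s1: "?T \<subseteq> B" by (auto simp: theta_def)
  have s2: "?T \<noteq> {}"
  proof -
    have "\<phi> h W0 \<in> B" using phi_in[OF W0(2)] I_sub' by blast
    hence "\<phi> h W0 \<in> ?T" using W0 by (auto simp: theta_def)
    thus ?thesis by blast
  qed
  have s3: "bot \<notin> ?T"
  proof
    assume "bot \<in> ?T"
    then obtain W where W: "W \<in> q" "W \<in> I (- h)" "\<phi> h W \<le> bot" by (auto simp: theta_def)
    hence "\<phi> h W = bot" by (simp add: bot_unique)
    hence "W = \<phi> (- h) bot" using phi_inv[OF W(2)] by simp
    hence "W = bot" by (simp add: phi_bot)
    thus False using W botq by simp
  qed
  have s4: "\<forall>x\<in>?T. \<forall>y\<in>B. x \<le> y \<longrightarrow> y \<in> ?T"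
    by (auto simp: theta_def intro: order_trans)
  have s5: "\<forall>x\<in>?T. \<forall>y\<in>?T. inf x y \<in> ?T"
  proof (intro ballI)
    fix x y assume "x \<in> ?T" "y \<in> ?T"
    then obtain W1 W2 where W: "W1 \<in> q" "W1 \<in> I (- h)" "\<phi> h W1 \<le> x" "x \<in> B"
      "W2 \<in> q" "W2 \<in> I (- h)" "\<phi> h W2 \<le> y" "y \<in> B" by (auto simp: theta_def)
    have "inf W1 W2 \<in> q" using mi W by blast
    moreover have "inf W1 W2 \<in> I (- h)" using I_inf W I_sub' by blast
    moreover have "\<phi> h (inf W1 W2) \<le> inf x y" using phi_inf W
      by (simp add: le_infI1 le_infI2)
    moreover have "inf x y \<in> B" using B_inf W by blast
    ultimately show "inf x y \<in> ?T" by (auto simp: theta_def)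
  qed
  have s6: "\<forall>x\<in>B. \<forall>y\<in>B. sup x y \<in> ?T \<longrightarrow> x \<in> ?T \<or> y \<in> ?T"
  proof (intro ballI impI)
    fix x y assume xy: "x \<in> B" "y \<in> B" "sup x y \<in> ?T"
    then obtain W where W: "W \<in> q" "W \<in> I (- h)" "\<phi> h W \<le> sup x y" by (auto simp: theta_def)
    define x' where "x' = inf (\<phi> h W) x"
    define y' where "y' = inf (\<phi> h W) y"
    have x'I: "x' \<in> I h" "y' \<in> I h" using I_inf phi_in W xy x'_def y'_def by auto
    have "\<phi> h W = sup x' y'" using W(3) unfolding x'_def y'_def
      by (metis inf.absorb1 inf_sup_distrib1)
    hence "W = \<phi> (- h) (sup x' y')" using phi_inv[OF W(2)] by simp
    also have "\<dots> = sup (\<phi> (- h) x') (\<phi> (- h) y')"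
      using phi_sup[of x' "- h" y'] x'I by simp
    finally have "sup (\<phi> (- h) x') (\<phi> (- h) y') \<in> q" using W by simp
    moreover have "\<phi> (- h) x' \<in> I (- h)" "\<phi> (- h) y' \<in> I (- h)" using phi_in' x'I by auto
    ultimately have "\<phi> (- h) x' \<in> q \<or> \<phi> (- h) y' \<in> q" using pr I_sub' by blast
    thus "x \<in> ?T \<or> y \<in> ?T"
    proof
      assume "\<phi> (- h) x' \<in> q"
      moreover have "\<phi> h (\<phi> (- h) x') \<le> x" using phi_inv' x'I x'_def by simp
      ultimately show ?thesis using \<open>\<phi> (- h) x' \<in> I (- h)\<close> xy by (auto simp: theta_def)
    next
      assume "\<phi> (- h) y' \<in> q"
      moreover have "\<phi> h (\<phi> (- h) y') \<le> y" using phi_inv' x'I y'_def by simp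
      ultimately show ?thesis using \<open>\<phi> (- h) y' \<in> I (- h)\<close> xy by (auto simp: theta_def)
    qed
  qed
  show ?thesis using s1 s2 s3 s4 s5 s6 unfolding stone_def by blast
qed

lemma alpha_ind:
  assumes X: "X \<in> I (- g)"
  shows "alpha B I \<phi> g (ind B X) q = (ind B (\<phi> g X) q :: 'r::comm_ring_1)"
proof (cases "q \<in> stone B \<and> q \<inter> I g \<noteq> {}")
  case True
  hence q: "q \<in> stone B" by blast
  have qB: "q \<subseteq> B" and up: "\<forall>x\<in>q. \<forall>y\<in>B. x \<le> y \<longrightarrow> y \<in> q"
    using q by (auto simp: stone_def)
  let ?T = "theta B I \<phi> (- g) q"
  have XB: "X \<in> B" using X I_sub' by blast
  show ?thesis
  proof (cases "\<phi> g X \<in> q")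
    case True
    have "\<phi> g X \<in> I (- (- g))" using phi_in[OF X] by simp
    hence T: "?T \<in> stone B" using theta_stone[OF q True] by blast
    have "X \<in> ?T" using True phi_in[OF X] phi_inv[OF X] XB unfolding theta_def
      by (simp add: bexI[of _ "\<phi> g X"])
    thus ?thesis using T True q by (simp add: alpha_def ind_def \<open>q \<in> stone B \<and> q \<inter> I g \<noteq> {}\<close>)
  next
    case False
    have "X \<notin> ?T"
    proof
      assume "X \<in> ?T"
      then obtain W where W: "W \<in> q" "W \<in> I g" "\<phi> (- g) W \<le> X" by (auto simp: theta_def)
      have "\<phi> g (\<phi> (- g) W) \<le> \<phi> g X" using phi_mono[OF phi_in'[OF W(2)] X W(3)] .
      hence "W \<le> \<phi> g X" using phi_inv'[OF W(2)] by simp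
      moreover have "\<phi> g X \<in> B" using phi_in[OF X] I_sub' by blast
      ultimately show False using up W False by blast
    qed
    thus ?thesis using False by (simp add: alpha_def ind_def \<open>q \<in> stone B \<and> q \<inter> I g \<noteq> {}\<close>)
  qed
next
  case False
  have "\<phi> g X \<in> I g" using phi_in[OF X] .
  thus ?thesis using False by (auto simp: alpha_def ind_def)
qed

lemma ind_mult:
  assumes "X \<in> B" "Y \<in> B"
  shows "ind B X q * ind B Y q = (ind B (inf X Y) q :: 'r::comm_ring_1)"
proof (cases "q \<in> stone B")
  case True
  have up: "\<forall>x\<in>q. \<forall>y\<in>B. x \<le> y \<longrightarrow> y \<in> q" and mi: "\<forall>x\<in>q. \<forall>y\<in>q. inf x y \<in> q"
    using True by (auto simp: stone_def)
  have "(X \<in> q \<and> Y \<in> q) = (inf X Y \<in> q)" using up mi assms by auto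
  thus ?thesis by (auto simp: ind_def)
qed (simp add: ind_def)


lemma lat_assoc:
  assumes U: "U \<in> I g" and V: "V \<in> I h" and W: "W \<in> I k"
  shows "\<phi> (g + h) (inf (\<phi> (- (g + h)) (\<phi> g (inf (\<phi> (- g) U) V))) W)
       = \<phi> g (inf (\<phi> (- g) U) (\<phi> h (inf (\<phi> (- h) V) W)))"
proof -
  define X where "X = inf (\<phi> (- g) U) V"
  have VB: "V \<in> B" "W \<in> B" using V W I_sub' by auto
  have XI: "X \<in> I (- g)" unfolding X_def using I_inf phi_in'[OF U] VB by blast
  have XI2: "X \<in> I h" unfolding X_def using I_inf2 V phi_in'[OF U] I_sub' by blast
  have XV: "X \<le> V" unfolding X_def by simp
  have gX: "\<phi> g X \<in> I (g + h)" using phi_dom[OF XI XI2] .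
  have "\<phi> (- (g + h)) (\<phi> g X) = \<phi> (- (g + h) + g) X"
    using phi_comp[OF XI, of "- (g + h)"] gX by simp
  also have "- (g + h) + g = - h" by (simp add: minus_add add.assoc)
  finally have L1: "\<phi> (- (g + h)) (\<phi> g X) = \<phi> (- h) X" .
  define Y where "Y = inf (\<phi> (- h) V) W"
  have YI: "Y \<in> I (- h)" unfolding Y_def using I_inf phi_in'[OF V] VB by blast
  have YV: "Y \<le> \<phi> (- h) V" unfolding Y_def by simp
  have hY: "\<phi> h Y \<le> V" using phi_mono[OF YI phi_in'[OF V] YV] phi_inv'[OF V] by simp
  define Y' where "Y' = inf (\<phi> (- h) X) W"
  have hXI: "\<phi> (- h) X \<in> I (- h)" using phi_in'[OF XI2] .
  have Y'I: "Y' \<in> I (- h)" unfolding Y'_def using I_inf hXI VB by blast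
  have hXV: "\<phi> (- h) X \<le> \<phi> (- h) V"
    using phi_mono[of X "- h" V] XI2 V XV by simp
  have Y'eq: "Y' = inf (\<phi> (- h) X) Y" unfolding Y'_def Y_def using hXV
    by (metis inf.absorb1 inf.assoc)
  have Z: "\<phi> h Y' = inf X (\<phi> h Y)"
    unfolding Y'eq using phi_inf[OF hXI YI] phi_inv'[OF XI2] by simp
  have Z2: "inf (\<phi> (- g) U) (\<phi> h Y) = inf X (\<phi> h Y)"
    unfolding X_def using hY by (metis inf.absorb2 inf.assoc inf.commute)
  have ZI: "\<phi> h Y' \<in> I (- g)" unfolding Z using I_inf XI phi_in[OF YI] I_sub' by blast
  have R: "\<phi> g (\<phi> h Y') = \<phi> (g + h) Y'" using phi_comp[OF Y'I ZI] .
  show ?thesis unfolding L1 X_def[symmetric] Y_def[symmetric]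
    using R Z Z2 Y'_def by simp
qed

end

lemma alpha_zero: "alpha B I \<phi> g (\<lambda>_. 0) q = 0"
  by (simp add: alpha_def)
lemma alpha_add: "alpha B I \<phi> g (\<lambda>q. f q + h q) p = alpha B I \<phi> g f p + alpha B I \<phi> g h p"
  by (simp add: alpha_def)
lemma alpha_smult: "alpha B I \<phi> g (\<lambda>q. r * f q) p = r * alpha B I \<phi> g f p"
  by (simp add: alpha_def)

lemma sum_fun_apply: "(sum f A) x = (\<Sum>i\<in>A. f i x)"
  by (induction A rule: infinite_finite_induct) auto

lemma cp_add_eq: "cp_add a b = a + b"
  by (simp add: cp_add_def plus_fun_def)
lemma cp_zero_eq: "cp_zero = 0"
  by (simp add: cp_zero_def zero_fun_def)

definition fs :: "('g \<Rightarrow> 'b set \<Rightarrow> 'r::comm_ring_1) \<Rightarrow> bool" where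
  "fs a \<longleftrightarrow> finite {g. a g \<noteq> (\<lambda>_. 0)}"

lemma cp_mult_S:
  assumes "finite S" "{g. a g \<noteq> (\<lambda>_. 0)} \<subseteq> S"
  shows "cp_mult B I \<phi> a b = (\<lambda>k p. \<Sum>g\<in>S. alpha B I \<phi> g (\<lambda>q. alpha B I \<phi> (- g) (a g) q * b (- g + k) q) p)"
proof (intro ext)
  fix k p
  show "cp_mult B I \<phi> a b k p = (\<Sum>g\<in>S. alpha B I \<phi> g (\<lambda>q. alpha B I \<phi> (- g) (a g) q * b (- g + k) q) p)"
    unfolding cp_mult_def
    by (rule sum.mono_neutral_left[OF assms(1) assms(2)]) (auto simp: alpha_def)
qed

lemma mult_zero_left: "cp_mult B I \<phi> 0 b = 0"
  by (simp add: cp_mult_def zero_fun_def)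
lemma mult_zero_right: "cp_mult B I \<phi> a 0 = 0"
  by (simp add: cp_mult_def zero_fun_def alpha_def)

lemma mult_add_right: "cp_mult B I \<phi> a (b + c) = cp_mult B I \<phi> a b + cp_mult B I \<phi> a c"
  by (simp add: cp_mult_def plus_fun_def distrib_left alpha_add sum.distrib)

lemma mult_smult_right: "cp_mult B I \<phi> a (cp_smult r b) = cp_smult r (cp_mult B I \<phi> a b)"
  by (simp add: cp_mult_def cp_smult_def alpha_smult sum_distrib_left mult.left_commute)

lemma fs_add: "fs a \<Longrightarrow> fs b \<Longrightarrow> fs (a + b)"
proof -
  assume "fs a" "fs b"
  moreover have "{g. (a + b) g \<noteq> (\<lambda>_. 0)} \<subseteq> {g. a g \<noteq> (\<lambda>_. 0)} \<union> {g. b g \<noteq> (\<lambda>_. 0)}"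
    by (auto simp: plus_fun_def)
  ultimately show ?thesis unfolding fs_def by (meson finite_Un finite_subset)
qed

lemma fs_smult: "fs a \<Longrightarrow> fs (cp_smult r a)"
proof -
  assume "fs a"
  moreover have "{g. cp_smult r a g \<noteq> (\<lambda>_. 0)} \<subseteq> {g. a g \<noteq> (\<lambda>_. 0)}"
    by (auto simp: cp_smult_def)
  ultimately show ?thesis unfolding fs_def by (meson finite_subset)
qed

lemma mult_add_left:
  assumes "fs a" "fs b"
  shows "cp_mult B I \<phi> (a + b) c = cp_mult B I \<phi> a c + cp_mult B I \<phi> b c"
proof -
  let ?S = "{g. a g \<noteq> (\<lambda>_. 0)} \<union> {g. b g \<noteq> (\<lambda>_. 0)}"
  have f: "finite ?S" using assms by (simp add: fs_def)
  have s: "{g. (a + b) g \<noteq> (\<lambda>_. 0)} \<subseteq> ?S" by (auto simp: plus_fun_def)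
  show ?thesis
    apply (subst cp_mult_S[OF f s], subst cp_mult_S[OF f], simp, subst cp_mult_S[OF f], simp)
    apply (simp add: plus_fun_def distrib_right alpha_add sum.distrib)
    done
qed

lemma mult_smult_left:
  assumes "fs a"
  shows "cp_mult B I \<phi> (cp_smult r a) c = cp_smult r (cp_mult B I \<phi> a c)"
proof -
  let ?S = "{g. a g \<noteq> (\<lambda>_. 0)}"
  have f: "finite ?S" using assms by (simp add: fs_def)
  have s: "{g. cp_smult r a g \<noteq> (\<lambda>_. 0)} \<subseteq> ?S" by (auto simp: cp_smult_def)
  show ?thesis
    apply (subst cp_mult_S[OF f s], subst cp_mult_S[OF f], simp)
    apply (simp add: cp_smult_def alpha_smult mult.assoc sum_distrib_left)
    done
qed

lemma fs_mult:
  assumes "fs a" "fs b"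
  shows "fs (cp_mult B I \<phi> a b)"
proof -
  let ?A = "{g. a g \<noteq> (\<lambda>_. 0)}" and ?B = "{g. b g \<noteq> (\<lambda>_. 0)}"
  have "{k. cp_mult B I \<phi> a b k \<noteq> (\<lambda>_. 0)} \<subseteq> (\<lambda>(g, h). g + h) ` (?A \<times> ?B)"
  proof
    fix k assume "k \<in> {k. cp_mult B I \<phi> a b k \<noteq> (\<lambda>_. 0)}"
    then obtain p where "cp_mult B I \<phi> a b k p \<noteq> 0" by auto
    then obtain g where g: "g \<in> ?A"
      "alpha B I \<phi> g (\<lambda>q. alpha B I \<phi> (- g) (a g) q * b (- g + k) q) p \<noteq> 0"
      unfolding cp_mult_def by (meson sum.not_neutral_contains_not_neutral)
    have "b (- g + k) \<noteq> (\<lambda>_. 0)"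
    proof
      assume "b (- g + k) = (\<lambda>_. 0)"
      thus False using g(2) by (simp add: alpha_def)
    qed
    hence "(g, - g + k) \<in> ?A \<times> ?B" using g by auto
    moreover have "k = g + (- g + k)" by (simp add: add.assoc[symmetric])
    ultimately show "k \<in> (\<lambda>(g, h). g + h) ` (?A \<times> ?B)" by force
  qed
  moreover have "finite ((\<lambda>(g, h). g + h) ` (?A \<times> ?B))" using assms by (simp add: fs_def)
  ultimately show ?thesis unfolding fs_def by (meson finite_subset)
qed


lemma cp_fs: "a \<in> cp B I \<Longrightarrow> fs a"
  by (simp add: cp_def fs_def)

lemma lc_zero: "(\<lambda>_. 0) \<in> lc B J"
  unfolding lc_def by (rule CollectI, rule exI[of _ "{}"]) auto

lemma lc_add: "f \<in> lc B J \<Longrightarrow> h \<in> lc B J \<Longrightarrow> (\<lambda>p. f p + h p) \<in> lc B J"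
proof -
  assume "f \<in> lc B J" "h \<in> lc B J"
  then obtain S1 c1 S2 c2 where 1: "finite S1" "S1 \<subseteq> J" "f = (\<lambda>p. \<Sum>U\<in>S1. c1 U * ind B U p)"
    and 2: "finite S2" "S2 \<subseteq> J" "h = (\<lambda>p. \<Sum>U\<in>S2. c2 U * ind B U p)"
    unfolding lc_def by blast
  define c where "c U = (if U \<in> S1 then c1 U else 0) + (if U \<in> S2 then c2 U else 0)" for U
  have "\<And>p. f p + h p = (\<Sum>U\<in>S1 \<union> S2. c U * ind B U p)"
  proof -
    fix p
    have a: "(\<Sum>U\<in>S1. c1 U * ind B U p) = (\<Sum>U\<in>S1 \<union> S2. (if U \<in> S1 then c1 U else 0) * ind B U p)"
      by (rule sum.mono_neutral_cong_left) (use 1 2 in auto)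
    have b: "(\<Sum>U\<in>S2. c2 U * ind B U p) = (\<Sum>U\<in>S1 \<union> S2. (if U \<in> S2 then c2 U else 0) * ind B U p)"
      by (rule sum.mono_neutral_cong_left) (use 1 2 in auto)
    show "f p + h p = (\<Sum>U\<in>S1 \<union> S2. c U * ind B U p)"
      unfolding 1(3) 2(3) a b c_def by (simp add: distrib_right sum.distrib)
  qed
  thus ?thesis unfolding lc_def using 1 2 by (intro CollectI exI[of _ "S1 \<union> S2"] exI[of _ c]) auto
qed

lemma lc_smult: "f \<in> lc B J \<Longrightarrow> (\<lambda>p. r * f p) \<in> lc B J"
proof -
  assume "f \<in> lc B J"
  then obtain S c where 1: "finite S" "S \<subseteq> J" "f = (\<lambda>p. \<Sum>U\<in>S. c U * ind B U p)"
    unfolding lc_def by blast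
  have "(\<lambda>p. r * f p) = (\<lambda>p. \<Sum>U\<in>S. (r * c U) * ind B U p)"
    unfolding 1(3) by (simp add: sum_distrib_left mult.assoc)
  thus ?thesis unfolding lc_def using 1 by (intro CollectI exI[of _ S] exI[of _ "\<lambda>U. r * c U"]) auto
qed

lemma lc_ind: "U \<in> J \<Longrightarrow> ind B U \<in> lc B J"
  unfolding lc_def by (rule CollectI, rule exI[of _ "{U}"], rule exI[of _ "\<lambda>_. 1"]) auto

lemma cp_zero_in: "0 \<in> cp B I"
  by (simp add: cp_def zero_fun_def lc_zero)

lemma cp_add_in: "a \<in> cp B I \<Longrightarrow> b \<in> cp B I \<Longrightarrow> a + b \<in> cp B I"
  using fs_add[of a b] by (simp add: cp_def fs_def plus_fun_def lc_add)

lemma cp_smult_in: "a \<in> cp B I \<Longrightarrow> cp_smult r a \<in> cp B I"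
  using fs_smult[of a r] by (simp add: cp_def fs_def cp_smult_def lc_smult)

lemma fs_delta: "fs (delta B U g)"
proof -
  have "{h. delta B U g h \<noteq> (\<lambda>_. 0)} \<subseteq> {g}" by (auto simp: delta_def)
  thus ?thesis unfolding fs_def by (rule finite_subset) simp
qed

lemma delta_in: "U \<in> I g \<Longrightarrow> delta B U g \<in> cp B I"
proof -
  assume U: "U \<in> I g"
  have "fs (delta B U g)" by (rule fs_delta)
  hence "finite {h. delta B U g h \<noteq> (\<lambda>_. 0)}" by (simp add: fs_def)
  moreover have "\<forall>h. delta B U g h \<in> lc B (I h)"
  proof
    fix h show "delta B U g h \<in> lc B (I h)"
      by (cases "h = g") (simp_all add: delta_def lc_ind U lc_zero)
  qed
  ultimately show ?thesis by (simp add: cp_def)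
qed


context pa begin

lemma delta_mult:
  assumes U: "U \<in> I g" and V: "V \<in> B"
  shows "cp_mult B I \<phi> (delta B U g) (delta B V h) = (delta B (\<phi> g (inf (\<phi> (- g) U) V)) (g + h) :: 'g \<Rightarrow> 'b set \<Rightarrow> 'r::comm_ring_1)"
proof -
  have s: "{g'. delta B U g g' \<noteq> (\<lambda>_. (0::'r))} \<subseteq> {g}" by (auto simp: delta_def)
  have U': "U \<in> I (- (- g))" using U by simp
  have X: "inf (\<phi> (- g) U) V \<in> I (- g)" using I_inf phi_in'[OF U] V by blast
  have e: "(- g + k = h) = (k = g + h)" for k by (metis add.assoc add.left_inverse add_0 add_minus_cancel)
  have d1: "delta B U g g = ind B U" by (simp add: delta_def)
  have a1: "alpha B I \<phi> (- g) (ind B U) = (ind B (\<phi> (- g) U) :: 'b set \<Rightarrow> 'r)"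
    by (intro ext) (rule alpha_ind[OF U'])
  have pr: "(\<lambda>q. ind B (\<phi> (- g) U) q * delta B V h (- g + k) q) =
     (if k = g + h then ind B (inf (\<phi> (- g) U) V) else (\<lambda>_. (0::'r)))" for k
    using ind_mult[OF I_sub'[OF phi_in'[OF U]] V] by (auto simp: delta_def e)
  have a2: "alpha B I \<phi> g (ind B (inf (\<phi> (- g) U) V)) = (ind B (\<phi> g (inf (\<phi> (- g) U) V)) :: 'b set \<Rightarrow> 'r)"
    by (intro ext) (rule alpha_ind[OF X])
  show ?thesis
  proof (intro ext)
    fix k p
    show "(cp_mult B I \<phi> (delta B U g) (delta B V h) k p :: 'r) = delta B (\<phi> g (inf (\<phi> (- g) U) V)) (g + h) k p"
    proof -
      have cm: "(cp_mult B I \<phi> (delta B U g) (delta B V h) k p :: 'r) = alpha B I \<phi> g (\<lambda>q. alpha B I \<phi> (- g) (delta B U g g) q * delta B V h (- g + k) q) p"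
      proof -
        have "(cp_mult B I \<phi> (delta B U g) (delta B V h) :: 'g \<Rightarrow> 'b set \<Rightarrow> 'r) = (\<lambda>k p. \<Sum>g'\<in>{g}. alpha B I \<phi> g' (\<lambda>q. alpha B I \<phi> (- g') (delta B U g g') q * delta B V h (- g' + k) q) p)"
          by (rule cp_mult_S) (auto simp: delta_def)
        note this[THEN fun_cong[where x=k], THEN fun_cong[where x=p]]
        thus ?thesis by simp
      qed
      show ?thesis unfolding cm d1 a1 pr
      by (cases "k = g + h") (simp_all add: a2 delta_def alpha_zero)
    qed
  qed
qed

lemma prod_in: "U \<in> I g \<Longrightarrow> V \<in> I h \<Longrightarrow> \<phi> g (inf (\<phi> (- g) U) V) \<in> I (g + h)"
proof -
  assume U: "U \<in> I g" and V: "V \<in> I h"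
  have XI: "inf (\<phi> (- g) U) V \<in> I (- g)" using I_inf phi_in'[OF U] I_sub'[OF V] by blast
  have XI2: "inf (\<phi> (- g) U) V \<in> I h" using I_inf2 V phi_in'[OF U] I_sub' by blast
  show ?thesis using phi_dom[OF XI XI2] .
qed

end

lemma sum_closed: "finite A \<Longrightarrow> (\<And>i. i \<in> A \<Longrightarrow> Q (f i)) \<Longrightarrow> Q 0 \<Longrightarrow> (\<And>x y. Q x \<Longrightarrow> Q y \<Longrightarrow> Q (x + y)) \<Longrightarrow> Q (sum f A)"
  by (induction A rule: finite_induct) auto

context pa begin

lemma cp_induct:
  assumes a: "a \<in> cp B I" and z: "P 0"
    and ad: "\<And>x y. x \<in> cp B I \<Longrightarrow> y \<in> cp B I \<Longrightarrow> P x \<Longrightarrow> P y \<Longrightarrow> P (x + y)"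
    and m: "\<And>r U g. U \<in> I g \<Longrightarrow> P (cp_smult r (delta B U g))"
  shows "P a"
proof -
  have fin: "finite {g. a g \<noteq> (\<lambda>_. 0)}" and lcs: "\<forall>g. a g \<in> lc B (I g)" using a by (auto simp: cp_def)
  have "\<forall>g. \<exists>S c. finite S \<and> S \<subseteq> I g \<and> a g = (\<lambda>p. \<Sum>U\<in>S. c U * ind B U p)"
    using lcs by (auto simp: lc_def)
  then obtain S c where Sc: "\<And>g. finite (S g) \<and> S g \<subseteq> I g \<and> a g = (\<lambda>p. \<Sum>U\<in>S g. c g U * ind B U p)"
    by metis
  let ?G = "{g. a g \<noteq> (\<lambda>_. 0)}"
  have rep: "a = (\<Sum>g\<in>?G. \<Sum>U\<in>S g. cp_smult (c g U) (delta B U g))"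
  proof (intro ext)
    fix h p
    have t: "(\<Sum>U\<in>S g. cp_smult (c g U) (delta B U g) h p) = (if h = g then a g p else 0)" for g
      using Sc[of g] by (cases "h = g") (simp_all add: sum_fun_apply cp_smult_def delta_def)
    have "(\<Sum>g\<in>?G. \<Sum>U\<in>S g. cp_smult (c g U) (delta B U g)) h p = (\<Sum>g\<in>?G. if h = g then a g p else 0)"
      by (simp add: sum_fun_apply t del: sum.delta)
    also have "\<dots> = (if h \<in> ?G then a h p else 0)" by (simp add: sum.delta fin)
    also have "\<dots> = a h p" by auto
    finally show "a h p = (\<Sum>g\<in>?G. \<Sum>U\<in>S g. cp_smult (c g U) (delta B U g)) h p" by simp
  qed
  let ?Q = "\<lambda>x. x \<in> cp B I \<and> P x"
  have "?Q (\<Sum>g\<in>?G. \<Sum>U\<in>S g. cp_smult (c g U) (delta B U g))"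
  proof (rule sum_closed[where Q="\<lambda>x. x \<in> cp B I \<and> P x", OF fin])
    fix g
    show "?Q (\<Sum>U\<in>S g. cp_smult (c g U) (delta B U g))"
    proof (rule sum_closed[where Q="\<lambda>x. x \<in> cp B I \<and> P x"])
      show "finite (S g)" using Sc by blast
      fix U assume "U \<in> S g"
      hence "U \<in> I g" using Sc by blast
      thus "?Q (cp_smult (c g U) (delta B U g))" using m cp_smult_in delta_in by blast
    qed (use z cp_zero_in ad cp_add_in in auto)
  qed (use z cp_zero_in ad cp_add_in in auto)
  thus ?thesis using rep by simp
qed

lemma delta_mult_in:
  fixes b :: "'g \<Rightarrow> 'b set \<Rightarrow> 'r::comm_ring_1"
  assumes U: "U \<in> I g" and b: "b \<in> cp B I"
  shows "cp_mult B I \<phi> (delta B U g) b \<in> cp B I"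
  using b
proof (rule cp_induct[where P = "\<lambda>x. cp_mult B I \<phi> (delta B U g) x \<in> cp B I"])
  show "cp_mult B I \<phi> (delta B U g) 0 \<in> cp B I" by (simp add: mult_zero_right cp_zero_in)
next
  fix x y :: "'g \<Rightarrow> 'b set \<Rightarrow> 'r" assume "cp_mult B I \<phi> (delta B U g) x \<in> cp B I" "cp_mult B I \<phi> (delta B U g) y \<in> cp B I"
  thus "cp_mult B I \<phi> (delta B U g) (x + y) \<in> cp B I" by (simp add: mult_add_right cp_add_in)
next
  fix r V h assume V: "V \<in> I h"
  show "cp_mult B I \<phi> (delta B U g) (cp_smult r (delta B V h)) \<in> cp B I"
    by (simp add: mult_smult_right delta_mult[OF U I_sub'[OF V]] cp_smult_in delta_in prod_in[OF U V])
qed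

lemma mult_cp:
  fixes a b :: "'g \<Rightarrow> 'b set \<Rightarrow> 'r::comm_ring_1"
  assumes a: "a \<in> cp B I" and b: "b \<in> cp B I"
  shows "cp_mult B I \<phi> a b \<in> cp B I"
  using a
proof (rule cp_induct[where P = "\<lambda>x. cp_mult B I \<phi> x b \<in> cp B I"])
  show "cp_mult B I \<phi> 0 b \<in> cp B I" by (simp add: mult_zero_left cp_zero_in)
next
  fix x y :: "'g \<Rightarrow> 'b set \<Rightarrow> 'r" assume "x \<in> cp B I" "y \<in> cp B I" "cp_mult B I \<phi> x b \<in> cp B I" "cp_mult B I \<phi> y b \<in> cp B I"
  thus "cp_mult B I \<phi> (x + y) b \<in> cp B I" by (simp add: mult_add_left cp_fs cp_add_in)
next
  fix r V h assume V: "V \<in> I h"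
  show "cp_mult B I \<phi> (cp_smult r (delta B V h)) b \<in> cp B I"
    by (simp add: mult_smult_left fs_delta cp_smult_in delta_mult_in[OF V b])
qed

lemma assoc3:
  assumes U: "U \<in> I g" and V: "V \<in> I h" and W: "W \<in> I k"
  shows "cp_mult B I \<phi> (cp_mult B I \<phi> (delta B U g) (delta B V h)) (delta B W k)
       = (cp_mult B I \<phi> (delta B U g) (cp_mult B I \<phi> (delta B V h) (delta B W k)) :: 'g \<Rightarrow> 'b set \<Rightarrow> 'r::comm_ring_1)"
proof -
  have VB: "V \<in> B" "W \<in> B" using V W I_sub' by auto
  have Y: "\<phi> h (inf (\<phi> (- h) V) W) \<in> B" using prod_in[OF V W] I_sub' by blast
  show ?thesis
    unfolding delta_mult[OF U VB(1)] delta_mult[OF V VB(2)] delta_mult[OF prod_in[OF U V] VB(2)]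
      delta_mult[OF U Y] lat_assoc[OF U V W] add.assoc ..
qed

lemma assoc_mm:
  fixes c :: "'g \<Rightarrow> 'b set \<Rightarrow> 'r::comm_ring_1"
  assumes U: "U \<in> I g" and V: "V \<in> I h" and c: "c \<in> cp B I"
  shows "cp_mult B I \<phi> (cp_mult B I \<phi> (delta B U g) (delta B V h)) c
       = cp_mult B I \<phi> (delta B U g) (cp_mult B I \<phi> (delta B V h) c)"
  using c
proof (rule cp_induct[where P = "\<lambda>x. cp_mult B I \<phi> (cp_mult B I \<phi> (delta B U g) (delta B V h)) x
       = cp_mult B I \<phi> (delta B U g) (cp_mult B I \<phi> (delta B V h) x)"])
qed (simp_all add: mult_zero_right mult_add_right mult_smult_right assoc3 U V)

lemma assoc_m:
  fixes b c :: "'g \<Rightarrow> 'b set \<Rightarrow> 'r::comm_ring_1"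
  assumes U: "U \<in> I g" and b: "b \<in> cp B I" and c: "c \<in> cp B I"
  shows "cp_mult B I \<phi> (cp_mult B I \<phi> (delta B U g) b) c
       = cp_mult B I \<phi> (delta B U g) (cp_mult B I \<phi> b c)"
  using b
proof (rule cp_induct[where P = "\<lambda>x. cp_mult B I \<phi> (cp_mult B I \<phi> (delta B U g) x) c
       = cp_mult B I \<phi> (delta B U g) (cp_mult B I \<phi> x c)"])
  fix x y :: "'g \<Rightarrow> 'b set \<Rightarrow> 'r" assume xy: "x \<in> cp B I" "y \<in> cp B I"
    and h: "cp_mult B I \<phi> (cp_mult B I \<phi> (delta B U g) x) c = cp_mult B I \<phi> (delta B U g) (cp_mult B I \<phi> x c)"
     "cp_mult B I \<phi> (cp_mult B I \<phi> (delta B U g) y) c = cp_mult B I \<phi> (delta B U g) (cp_mult B I \<phi> y c)"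
  have f: "fs x" "fs y" "fs (cp_mult B I \<phi> (delta B U g) x)" "fs (cp_mult B I \<phi> (delta B U g) y)"
    using xy by (auto simp: cp_fs fs_mult fs_delta)
  show "cp_mult B I \<phi> (cp_mult B I \<phi> (delta B U g) (x + y)) c = cp_mult B I \<phi> (delta B U g) (cp_mult B I \<phi> (x + y) c)"
    by (simp add: mult_add_right mult_add_left f h)
next
  fix r V h assume V: "V \<in> I h"
  have f: "fs (cp_mult B I \<phi> (delta B U g) (delta B V h))" by (simp add: fs_mult fs_delta)
  show "cp_mult B I \<phi> (cp_mult B I \<phi> (delta B U g) (cp_smult r (delta B V h))) c =
        cp_mult B I \<phi> (delta B U g) (cp_mult B I \<phi> (cp_smult r (delta B V h)) c)"
    by (simp add: mult_smult_right mult_smult_left f fs_delta assoc_mm[OF U V c])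
qed (simp add: mult_zero_right mult_zero_left)

lemma assoc:
  fixes a b c :: "'g \<Rightarrow> 'b set \<Rightarrow> 'r::comm_ring_1"
  assumes a: "a \<in> cp B I" and b: "b \<in> cp B I" and c: "c \<in> cp B I"
  shows "cp_mult B I \<phi> (cp_mult B I \<phi> a b) c = cp_mult B I \<phi> a (cp_mult B I \<phi> b c)"
  using a
proof (rule cp_induct[where P = "\<lambda>x. cp_mult B I \<phi> (cp_mult B I \<phi> x b) c
       = cp_mult B I \<phi> x (cp_mult B I \<phi> b c)"])
  fix x y :: "'g \<Rightarrow> 'b set \<Rightarrow> 'r" assume xy: "x \<in> cp B I" "y \<in> cp B I"
    and h: "cp_mult B I \<phi> (cp_mult B I \<phi> x b) c = cp_mult B I \<phi> x (cp_mult B I \<phi> b c)"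
     "cp_mult B I \<phi> (cp_mult B I \<phi> y b) c = cp_mult B I \<phi> y (cp_mult B I \<phi> b c)"
  have f: "fs x" "fs y" "fs (cp_mult B I \<phi> x b)" "fs (cp_mult B I \<phi> y b)"
    using xy b by (auto simp: cp_fs fs_mult)
  show "cp_mult B I \<phi> (cp_mult B I \<phi> (x + y) b) c = cp_mult B I \<phi> (x + y) (cp_mult B I \<phi> b c)"
    by (simp add: mult_add_left f h)
next
  fix r V h assume V: "V \<in> I h"
  have f: "fs (cp_mult B I \<phi> (delta B V h) b)" using b by (simp add: fs_mult fs_delta cp_fs)
  show "cp_mult B I \<phi> (cp_mult B I \<phi> (cp_smult r (delta B V h)) b) c =
        cp_mult B I \<phi> (cp_smult r (delta B V h)) (cp_mult B I \<phi> b c)"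
    by (simp add: mult_smult_left f fs_delta assoc_m[OF V b c])
qed (simp add: mult_zero_left)

end
context pa begin

lemma mult_sum_right:
  "cp_mult B I \<phi> a (sum f A) = (\<Sum>j\<in>A. cp_mult B I \<phi> a (f j))"
proof (induction A rule: infinite_finite_induct)
  case (infinite A)
  show ?case unfolding sum.infinite[OF infinite] by (rule mult_zero_right)
next
  case empty
  show ?case unfolding sum.empty by (rule mult_zero_right)
next
  case (insert x F)
  show ?case unfolding sum.insert[OF insert.hyps] by (simp only: mult_add_right insert.IH)
qed

lemma cp_sum_in: "(\<And>j. j \<in> A \<Longrightarrow> f j \<in> cp B I) \<Longrightarrow> sum f A \<in> cp B I"
  by (induction A rule: infinite_finite_induct) (simp_all add: cp_zero_in cp_add_in)

lemma mult_sum_left: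
  "(\<And>j. j \<in> A \<Longrightarrow> f j \<in> cp B I) \<Longrightarrow> cp_mult B I \<phi> (sum f A) b = (\<Sum>j\<in>A. cp_mult B I \<phi> (f j) b)"
proof (induction A rule: infinite_finite_induct)
  case (insert x F)
  have "sum f F \<in> cp B I" by (rule cp_sum_in) (use insert.prems in auto)
  hence "fs (f x)" "fs (sum f F)" using insert.prems cp_fs by auto
  hence "cp_mult B I \<phi> (f x + sum f F) b = cp_mult B I \<phi> (f x) b + cp_mult B I \<phi> (sum f F) b"
    by (rule mult_add_left)
  moreover have "cp_mult B I \<phi> (sum f F) b = (\<Sum>j\<in>F. cp_mult B I \<phi> (f j) b)"
    using insert by auto
  ultimately show ?case unfolding sum.insert[OF insert.hyps] by (simp only:)
next
  case (infinite A)
  show ?case unfolding sum.infinite[OF infinite.hyps] by (rule mult_zero_left)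
next
  case empty
  show ?case unfolding sum.empty by (rule mult_zero_left)
qed

end

lemma smult_add: "cp_smult r (x + y) = cp_smult r x + cp_smult r y"
  by (simp add: cp_smult_def plus_fun_def distrib_left)
lemma smult_zero: "cp_smult r 0 = 0"
  by (simp add: cp_smult_def zero_fun_def)



lemma sum_list_map_hom:
  assumes "\<forall>t\<in>set L. P (T t)" "\<And>x y. P x \<Longrightarrow> P y \<Longrightarrow> P (x + y)" "P 0"
    "\<And>x y. P x \<Longrightarrow> P y \<Longrightarrow> h (x + y) = h x + h y" "h 0 = (0::'a::monoid_add)"
  shows "h (sum_list (map T L)) = sum_list (map (\<lambda>t. h (T t)) L)"
proof -
  have "P (sum_list (map T L)) \<and> h (sum_list (map T L)) = sum_list (map (\<lambda>t. h (T t)) L)"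
    using assms(1)
  proof (induction L)
    case Nil thus ?case using assms by simp
  next
    case (Cons a L)
    hence "P (T a)" "P (sum_list (map T L))" by auto
    thus ?case using Cons assms(2,4) by simp
  qed
  thus ?thesis by blast
qed

theorem theorem4p13:
  fixes B1 B2 :: "'b::boolean_algebra set"
    and I1 I2 :: "'g::group_add \<Rightarrow> 'b set"
    and \<phi>1 \<phi>2 :: "'g \<Rightarrow> 'b \<Rightarrow> 'b"
    and U :: 'b
  assumes sub: "partial_subaction B1 I1 \<phi>1 B2 I2 \<phi>2"
    and ideal: "gba_ideal B2 B1"
    and full: "\<forall>J :: ('g \<Rightarrow> 'b set \<Rightarrow> 'r::comm_ring_1) set.
                 cp_ideal B2 I2 \<phi>2 J \<and> cp_span B2 I1 \<subseteq> J \<longrightarrow> J = cp B2 I2"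
    and U: "U \<in> B2"
  shows "\<exists>(Idx :: (('g \<Rightarrow> 'b set \<Rightarrow> 'r) \<times> nat) set) Us
            (F :: ((('g \<Rightarrow> 'b set \<Rightarrow> 'r) \<times> nat) \<Rightarrow> 'g \<Rightarrow> 'b set \<Rightarrow> 'r) \<Rightarrow> 'g \<Rightarrow> 'b set \<Rightarrow> 'r).
           (\<forall>i\<in>Idx. Us i \<in> B1) \<and>
           surj_lmod_hom B2 I2 \<phi>2
             (dsum Idx (\<lambda>i. cp_lmod B2 I2 \<phi>2 (delta B2 (Us i) 0)))
             (cp_lmod B2 I2 \<phi>2 (delta B2 U 0)) F"
proof -
  interpret P2: pa B2 I2 \<phi>2 using sub by (simp add: partial_subaction_def pa_def)
  interpret P1: pa B1 I1 \<phi>1 using sub by (simp add: partial_subaction_def pa_def)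
  have B12: "B1 \<subseteq> B2" and I12: "\<And>t. I1 t \<subseteq> I2 t" using sub by (auto simp: partial_subaction_def)
  let ?M = "cp_mult B2 I2 \<phi>2 :: ('g \<Rightarrow> 'b set \<Rightarrow> 'r) \<Rightarrow> _ \<Rightarrow> _"
  let ?CP = "cp B2 I2 :: ('g \<Rightarrow> 'b set \<Rightarrow> 'r) set"
  have dB: "V \<in> B2 \<Longrightarrow> (delta B2 V 0 :: 'g \<Rightarrow> 'b set \<Rightarrow> 'r) \<in> ?CP" for V
    using delta_in[where U=V and g=0 and I=I2 and B=B2] P2.I0 by simp
  have idem: "V \<in> B2 \<Longrightarrow> ?M (delta B2 V 0) (delta B2 V 0) = delta B2 V 0" for V
    using P2.delta_mult[of V 0 V 0] P2.I0 P2.phi0 by simp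
  define T :: "('g \<Rightarrow> 'b set \<Rightarrow> 'r) \<times> 'b \<times> ('g \<Rightarrow> 'b set \<Rightarrow> 'r) \<Rightarrow> 'g \<Rightarrow> 'b set \<Rightarrow> 'r"
    where "T t = ?M (?M (fst t) (delta B2 (fst (snd t)) 0)) (snd (snd t))" for t
  define ok where "ok t \<longleftrightarrow> fst t \<in> ?CP \<and> fst (snd t) \<in> B1 \<and> snd (snd t) \<in> ?CP" for t
  have Tcp: "ok t \<Longrightarrow> T t \<in> ?CP" for t
    unfolding T_def ok_def using B12 dB by (auto intro!: P2.mult_cp)
  have Lcp: "(\<forall>t\<in>set L. ok t) \<Longrightarrow> sum_list (map T L) \<in> ?CP" for L
    by (induction L) (auto simp: Tcp cp_zero_in cp_add_in)
  define J where "J = {z. \<exists>L. (\<forall>t\<in>set L. ok t) \<and> z = sum_list (map T L)}"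
  have J_add: "x \<in> J \<Longrightarrow> y \<in> J \<Longrightarrow> x + y \<in> J" for x y
  proof -
    assume "x \<in> J" "y \<in> J"
    then obtain L1 L2 where "\<forall>t\<in>set L1. ok t" "x = sum_list (map T L1)"
      "\<forall>t\<in>set L2. ok t" "y = sum_list (map T L2)" unfolding J_def by blast
    thus ?thesis unfolding J_def by (intro CollectI exI[where x="L1 @ L2"]) auto
  qed
  have J_zero: "0 \<in> J" unfolding J_def by (auto intro!: exI[where x="[]"])
  have J_smult: "x \<in> J \<Longrightarrow> cp_smult r x \<in> J" for x r
  proof -
    assume "x \<in> J"
    then obtain L where L: "\<forall>t\<in>set L. ok t" "x = sum_list (map T L)" unfolding J_def by blast
    let ?L' = "map (\<lambda>t. (cp_smult r (fst t), snd t)) L"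
    have "cp_smult r (sum_list (map T L)) = sum_list (map (\<lambda>t. cp_smult r (T t)) L)"
      by (rule sum_list_map_hom[where P="\<lambda>_. True" and h="cp_smult r" and T=T]) (simp_all add: smult_add smult_zero)
    also have "map (\<lambda>t. cp_smult r (T t)) L = map T ?L'"
    proof -
      have "cp_smult r (T t) = T (cp_smult r (fst t), snd t)" if t: "t \<in> set L" for t
      proof -
        have f: "fs (fst t)" "fs (?M (fst t) (delta B2 (fst (snd t)) 0))"
          using L(1) t B12 dB by (auto simp: ok_def cp_fs intro!: cp_fs P2.mult_cp)
        show ?thesis unfolding T_def using f by (simp add: mult_smult_left)
      qed
      thus ?thesis by simp
    qed
    finally have "cp_smult r (sum_list (map T L)) = sum_list (map T ?L')" .
    moreover have "\<forall>t\<in>set ?L'. ok t" using L(1) by (auto simp: ok_def cp_smult_in)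
    ultimately show ?thesis unfolding J_def using L(2) by blast
  qed
  have J_left: "a \<in> ?CP \<Longrightarrow> x \<in> J \<Longrightarrow> ?M a x \<in> J" for a x
  proof -
    assume a: "a \<in> ?CP" and "x \<in> J"
    then obtain L where L: "\<forall>t\<in>set L. ok t" "x = sum_list (map T L)" unfolding J_def by blast
    let ?L' = "map (\<lambda>t. (?M a (fst t), snd t)) L"
    have "?M a (sum_list (map T L)) = sum_list (map (\<lambda>t. ?M a (T t)) L)"
      by (rule sum_list_map_hom[where P="\<lambda>_. True" and h="?M a" and T=T]) (simp_all add: mult_add_right mult_zero_right)
    also have "map (\<lambda>t. ?M a (T t)) L = map T ?L'"
    proof -
      have "?M a (T t) = T (?M a (fst t), snd t)" if t: "t \<in> set L" for t
      proof -
        have c: "fst t \<in> ?CP" "delta B2 (fst (snd t)) 0 \<in> ?CP" "snd (snd t) \<in> ?CP"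
          using L(1) t B12 dB by (auto simp: ok_def)
        show ?thesis unfolding T_def using c a by (simp add: P2.assoc P2.mult_cp)
      qed
      thus ?thesis by simp
    qed
    finally have "?M a (sum_list (map T L)) = sum_list (map T ?L')" .
    moreover have "\<forall>t\<in>set ?L'. ok t" using L(1) a by (auto simp: ok_def P2.mult_cp)
    ultimately show ?thesis unfolding J_def using L(2) by blast
  qed
  have J_right: "a \<in> ?CP \<Longrightarrow> x \<in> J \<Longrightarrow> ?M x a \<in> J" for a x
  proof -
    assume a: "a \<in> ?CP" and "x \<in> J"
    then obtain L where L: "\<forall>t\<in>set L. ok t" "x = sum_list (map T L)" unfolding J_def by blast
    let ?L' = "map (\<lambda>t. (fst t, fst (snd t), ?M (snd (snd t)) a)) L"
    have "?M (sum_list (map T L)) a = sum_list (map (\<lambda>t. ?M (T t) a) L)"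
      by (rule sum_list_map_hom[where P="\<lambda>x. x \<in> ?CP" and h="\<lambda>x. ?M x a" and T=T])
        (use L(1) Tcp in \<open>auto simp: cp_add_in cp_zero_in mult_add_left cp_fs mult_zero_left\<close>)
    also have "map (\<lambda>t. ?M (T t) a) L = map T ?L'"
    proof -
      have "?M (T t) a = T (fst t, fst (snd t), ?M (snd (snd t)) a)" if t: "t \<in> set L" for t
      proof -
        have c: "fst t \<in> ?CP" "delta B2 (fst (snd t)) 0 \<in> ?CP" "snd (snd t) \<in> ?CP"
          using L(1) t B12 dB by (auto simp: ok_def)
        show ?thesis unfolding T_def using c a by (simp add: P2.assoc P2.mult_cp)
      qed
      thus ?thesis by simp
    qed
    finally have "?M (sum_list (map T L)) a = sum_list (map T ?L')" .
    moreover have "\<forall>t\<in>set ?L'. ok t" using L(1) a by (auto simp: ok_def P2.mult_cp)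
    ultimately show ?thesis unfolding J_def using L(2) by blast
  qed
  have J_cp: "J \<subseteq> ?CP" unfolding J_def using Lcp by blast
  have J_delta: "V \<in> I1 g \<Longrightarrow> delta B2 V g \<in> J" for V g
  proof -
    assume V: "V \<in> I1 g"
    have V2: "V \<in> I2 g" "V \<in> B2" "V \<in> B1" using V I12 P2.I_sub' P1.I_sub' by auto
    have "?M (?M (delta B2 V 0) (delta B2 V 0)) (delta B2 V g) = delta B2 V g"
      using idem[OF V2(2)] P2.delta_mult[of V 0 V g] P2.I0 P2.phi0 V2 by simp
    hence "delta B2 V g = T (delta B2 V 0, V, delta B2 V g)" unfolding T_def by simp
    moreover have "ok (delta B2 V 0, V, delta B2 V g)"
      using V2 dB delta_in by (auto simp: ok_def)
    ultimately show ?thesis unfolding J_def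
      by (intro CollectI exI[where x="[(delta B2 V 0, V, delta B2 V g)]"]) auto
  qed
  have ideal_J: "cp_ideal B2 I2 \<phi>2 J"
    unfolding cp_ideal_def cp_add_eq cp_zero_eq
    by (intro conjI ballI allI J_cp J_zero J_add J_smult J_left J_right)
  have span_J: "cp_span B2 I1 \<subseteq> J"
  proof
    fix z :: "'g \<Rightarrow> 'b set \<Rightarrow> 'r" assume "z \<in> cp_span B2 I1"
    then obtain S c where S: "finite S" "S \<subseteq> {(U, g). U \<in> I1 g}"
      and z: "z = (\<lambda>h p. \<Sum>(U, g)\<in>S. c (U, g) * delta B2 U g h p)"
      unfolding cp_span_def by blast
    have "z = (\<Sum>s\<in>S. cp_smult (c s) (delta B2 (fst s) (snd s)))"
      unfolding z by (intro ext) (simp add: sum_fun_apply cp_smult_def case_prod_beta)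
    also have "\<dots> \<in> J"
    proof (rule sum_closed[where Q="\<lambda>x. x \<in> J", OF S(1)])
      fix s assume "s \<in> S"
      hence "fst s \<in> I1 (snd s)" using S(2) by auto
      thus "cp_smult (c s) (delta B2 (fst s) (snd s)) \<in> J" using J_delta J_smult by blast
    qed (use J_zero J_add in auto)
    finally show "z \<in> J" .
  qed
  have JCP: "J = ?CP" using full ideal_J span_J by blast
  let ?u = "delta B2 U 0 :: 'g \<Rightarrow> 'b set \<Rightarrow> 'r"
  have ucp: "?u \<in> ?CP" using dB U by blast
  then obtain L where L: "\<forall>t\<in>set L. ok t" "?u = sum_list (map T L)"
    using JCP unfolding J_def by blast
  have uu: "?M ?u ?u = ?u" using idem U by blast
  define n where "n = length L"
  define Idx :: "(('g \<Rightarrow> 'b set \<Rightarrow> 'r) \<times> nat) set" where "Idx = (\<lambda>j. (0, j)) ` {..<n}"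
  define Us where "Us i = fst (snd (L ! snd i))" for i :: "('g \<Rightarrow> 'b set \<Rightarrow> 'r) \<times> nat"
  define F where "F x = (\<Sum>j<n. ?M (?M (x (0, j)) (snd (snd (L ! j)))) ?u)"
    for x :: "('g \<Rightarrow> 'b set \<Rightarrow> 'r) \<times> nat \<Rightarrow> 'g \<Rightarrow> 'b set \<Rightarrow> 'r"
  have okj: "j < n \<Longrightarrow> ok (L ! j)" for j using L(1) n_def by auto
  have UsB1: "\<forall>i\<in>Idx. Us i \<in> B1" using okj by (auto simp: Idx_def Us_def ok_def)
  let ?D = "dsum Idx (\<lambda>i. cp_lmod B2 I2 \<phi>2 (delta B2 (Us i) 0))"
  have Dcp: "x \<in> ?D \<Longrightarrow> j < n \<Longrightarrow> x (0, j) \<in> ?CP" for x j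
  proof -
    assume x: "x \<in> ?D" and j: "j < n"
    have "(0, j) \<in> Idx" using j by (auto simp: Idx_def)
    hence "x (0, j) \<in> cp_lmod B2 I2 \<phi>2 (delta B2 (Us (0, j)) 0)" using x by (auto simp: dsum_def)
    then obtain a where "a \<in> ?CP" "x (0, j) = ?M a (delta B2 (Us (0, j)) 0)"
      unfolding cp_lmod_def by blast
    moreover have "Us (0, j) \<in> B2" using UsB1 \<open>(0, j) \<in> Idx\<close> B12 by blast
    ultimately show ?thesis using dB P2.mult_cp by auto
  qed
  have ccp: "j < n \<Longrightarrow> snd (snd (L ! j)) \<in> ?CP" for j using okj by (auto simp: ok_def)
  have hom_add: "\<forall>x\<in>?D. \<forall>y\<in>?D. F (\<lambda>i. cp_add (x i) (y i)) = cp_add (F x) (F y)"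
  proof (intro ballI)
    fix x y :: "('g \<Rightarrow> 'b set \<Rightarrow> 'r) \<times> nat \<Rightarrow> 'g \<Rightarrow> 'b set \<Rightarrow> 'r" assume x: "x \<in> ?D" and y: "y \<in> ?D"
    have "?M (?M (x (0, j) + y (0, j)) (snd (snd (L ! j)))) ?u
        = ?M (?M (x (0, j)) (snd (snd (L ! j)))) ?u + ?M (?M (y (0, j)) (snd (snd (L ! j)))) ?u"
      if j: "j < n" for j
    proof -
      have f: "fs (x (0, j))" "fs (y (0, j))" "fs (?M (x (0, j)) (snd (snd (L ! j))))"
        "fs (?M (y (0, j)) (snd (snd (L ! j))))"
        using Dcp[OF x j] Dcp[OF y j] ccp[OF j] by (auto simp: cp_fs fs_mult)
      show ?thesis by (simp add: mult_add_left f)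
    qed
    thus "F (\<lambda>i. cp_add (x i) (y i)) = cp_add (F x) (F y)"
      unfolding F_def cp_add_eq by (simp add: sum.distrib)
  qed
  have hom_lin: "\<forall>a\<in>?CP. \<forall>x\<in>?D. F (\<lambda>i. ?M a (x i)) = ?M a (F x)"
  proof (intro ballI)
    fix a :: "'g \<Rightarrow> 'b set \<Rightarrow> 'r" and x :: "('g \<Rightarrow> 'b set \<Rightarrow> 'r) \<times> nat \<Rightarrow> 'g \<Rightarrow> 'b set \<Rightarrow> 'r" assume a: "a \<in> ?CP" and x: "x \<in> ?D"
    have "?M (?M (?M a (x (0, j))) (snd (snd (L ! j)))) ?u
        = ?M a (?M (?M (x (0, j)) (snd (snd (L ! j)))) ?u)" if j: "j < n" for j
      using a Dcp[OF x j] ccp[OF j] ucp by (simp add: P2.assoc P2.mult_cp)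
    thus "F (\<lambda>i. ?M a (x i)) = ?M a (F x)"
      unfolding F_def by (simp add: P2.mult_sum_right)
  qed
  have img1: "F ` ?D \<subseteq> cp_lmod B2 I2 \<phi>2 ?u"
  proof
    fix z :: "'g \<Rightarrow> 'b set \<Rightarrow> 'r" assume "z \<in> F ` ?D"
    then obtain x where x: "x \<in> ?D" "z = F x" by blast
    have "F x = ?M (\<Sum>j<n. ?M (x (0, j)) (snd (snd (L ! j)))) ?u"
      unfolding F_def using x Dcp ccp by (subst P2.mult_sum_left) (auto intro: P2.mult_cp)
    moreover have "(\<Sum>j<n. ?M (x (0, j)) (snd (snd (L ! j)))) \<in> ?CP"
      using x Dcp ccp by (auto intro!: P2.cp_sum_in P2.mult_cp)
    ultimately show "z \<in> cp_lmod B2 I2 \<phi>2 ?u" unfolding cp_lmod_def using x by blast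
  qed
  have img2: "cp_lmod B2 I2 \<phi>2 ?u \<subseteq> F ` ?D"
  proof
    fix z :: "'g \<Rightarrow> 'b set \<Rightarrow> 'r" assume "z \<in> cp_lmod B2 I2 \<phi>2 ?u"
    then obtain a where a: "a \<in> ?CP" "z = ?M a ?u" unfolding cp_lmod_def by blast
    define x where "x i = (if i \<in> Idx then ?M (?M a (fst (L ! snd i))) (delta B2 (Us i) 0) else cp_zero)"
      for i
    have bcp: "j < n \<Longrightarrow> fst (L ! j) \<in> ?CP" for j using okj by (auto simp: ok_def)
    have xD: "x \<in> ?D"
    proof -
      have "\<forall>i\<in>Idx. x i \<in> cp_lmod B2 I2 \<phi>2 (delta B2 (Us i) 0)"
        unfolding x_def cp_lmod_def using a bcp by (auto simp: Idx_def intro!: P2.mult_cp)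
      moreover have "\<forall>i. i \<notin> Idx \<longrightarrow> x i = cp_zero" by (simp add: x_def)
      moreover have "finite {i. x i \<noteq> cp_zero}"
        by (rule finite_subset[of _ Idx]) (auto simp: x_def Idx_def)
      ultimately show ?thesis by (simp add: dsum_def)
    qed
    have "F x = (\<Sum>j<n. ?M a (?M (T (L ! j)) ?u))"
    proof (unfold F_def, rule sum.cong[OF refl])
      fix j assume "j \<in> {..<n}"
      hence j: "j < n" by simp
      have x0: "x (0, j) = ?M (?M a (fst (L ! j))) (delta B2 (fst (snd (L ! j))) 0)"
        using j by (simp add: x_def Idx_def Us_def)
      have c: "fst (L ! j) \<in> ?CP" "delta B2 (fst (snd (L ! j))) 0 \<in> ?CP" "snd (snd (L ! j)) \<in> ?CP"
        using okj[OF j] B12 dB by (auto simp: ok_def)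
      show "?M (?M (x (0, j)) (snd (snd (L ! j)))) ?u = ?M a (?M (T (L ! j)) ?u)"
        unfolding x0 T_def using a c ucp by (simp add: P2.assoc P2.mult_cp)
    qed
    also have "\<dots> = ?M a (\<Sum>j<n. ?M (T (L ! j)) ?u)" by (simp add: P2.mult_sum_right)
    also have "(\<Sum>j<n. ?M (T (L ! j)) ?u) = ?M (\<Sum>j<n. T (L ! j)) ?u"
      using okj Tcp by (subst P2.mult_sum_left) auto
    also have "(\<Sum>j<n. T (L ! j)) = ?u"
      using L(2) by (simp add: sum_list_sum_nth n_def atLeast0LessThan)
    finally have "F x = z" using uu a by simp
    thus "z \<in> F ` ?D" using xD by blast
  qed
  show ?thesis
    apply (rule exI[where x=Idx], rule exI[where x=Us], rule exI[where x=F])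
    unfolding surj_lmod_hom_def using UsB1 hom_add hom_lin img1 img2 by blast
qed

end
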